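(* Let $d\in\mathbb{N}$. Then $$\Pi=\bigcap_{\psi\in\mathcal{D}'}W(\psi),$$ where $\mathcal{D}'\subset\mathcal{D}$ consists of those functions in $\mathcal{D}$ all of whose values are reciprocals of natural numbers.
   Context: For $z\in\mathbb{R}^d$, $\|z\|$ denotes the sup-norm distance from $z$ to $\mathbb{Z}^d$. Write $\mathbb{N}=\{1,2,\dots\}$. For $\psi:\mathbb{N}\to\mathbb{R}_{\ge 0}$, let $W(\psi)$ be the set of pairs $(x,y)\in\mathbb{R}^d\times\mathbb{R}^d$ for which $\|nx+y\|<\psi(n)$ holds for infinitely many $n\in\mathbb{N}$. $\mathcal{D}$ is the set of all non-increasing $\psi:\mathbb{N}\to\mathbb{R}_{\ge0}$ with $\sum_n\psi(n)^d=\infty$, and $\Pi=\bigcap_{\psi\in\mathcal{D}}W(\psi)$. *)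

theory Defs
  imports "HOL-Analysis.Analysis"
begin

definition znorm :: "real ^ 'd \<Rightarrow> real" where
  "znorm z = (MAX i \<in> UNIV. \<bar>z $ i - of_int (round (z $ i))\<bar>)"

definition W :: "(nat \<Rightarrow> real) \<Rightarrow> ((real ^ 'd) \<times> (real ^ 'd)) set" where
  "W psi = {(x, y). infinite {n::nat. n \<ge> 1 \<and> znorm (of_nat n *\<^sub>R x + y) < psi n}}"

text \<open>The class D (for dimension d = CARD('d)): non-increasing psi : N -> R_{>=0}
with sum psi(n)^d divergent. Functions are nat => real; only values at n >= 1 matter.\<close>
definition DD :: "'d itself \<Rightarrow> (nat \<Rightarrow> real) set" where
  "DD _ = {psi. (\<forall>n\<ge>1. psi n \<ge> 0) \<and> (\<forall>m n. 1 \<le> m \<and> m \<le> n \<longrightarrow> psi n \<le> psi m)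
              \<and> \<not> summable (\<lambda>n. psi (Suc n) ^ CARD('d))}"

definition DD' :: "'d itself \<Rightarrow> (nat \<Rightarrow> real) set" where
  "DD' t = {psi \<in> DD t. \<forall>n\<ge>1. \<exists>k::nat. k \<ge> 1 \<and> psi n = 1 / real k}"

definition Pi_set :: "'d itself \<Rightarrow> ((real ^ 'd) \<times> (real ^ 'd)) set" where
  "Pi_set t = (\<Inter>psi \<in> DD t. (W psi :: ((real ^ 'd) \<times> (real ^ 'd)) set))"

end

theory Submission
  imports Defs
begin

lemma pos_of_DD:
  assumes "psi \<in> DD TYPE('d::finite)" "n \<ge> 1"
  shows "psi n > 0"
proof (rule ccontr)
  assume "\<not> psi n > 0"
  with assms have z: "psi n = 0" unfolding DD_def by force
  have "\<forall>m\<ge>n. psi (Suc m) ^ CARD('d) = 0"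
  proof (intro allI impI)
    fix m assume "m \<ge> n"
    have d: "\<forall>m n. 1 \<le> m \<and> m \<le> n \<longrightarrow> psi n \<le> psi m" "\<forall>n\<ge>1. psi n \<ge> 0"
      using assms(1) unfolding DD_def by auto
    have "psi (Suc m) \<le> psi n" using d(1) assms(2) \<open>m \<ge> n\<close> by simp
    hence "psi (Suc m) \<le> 0" using z by simp
    moreover have "psi (Suc m) \<ge> 0" using d(2) by simp
    ultimately have "psi (Suc m) = 0" by simp
    thus "psi (Suc m) ^ CARD('d) = 0" by simp
  qed
  hence "eventually (\<lambda>m. norm (psi (Suc m) ^ CARD('d)) \<le> (0::real)) sequentially"
    unfolding eventually_sequentially by auto
  hence "summable (\<lambda>m. psi (Suc m) ^ CARD('d))"
    by (rule summable_comparison_test_ev) simp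
  with assms show False unfolding DD_def by auto
qed

definition kk :: "real \<Rightarrow> nat" where "kk p = nat (ceiling (1 / p))"

lemma kk_props:
  assumes "p > 0"
  shows "kk p \<ge> 1" "1 / real (kk p) \<le> p" "p < 1 \<Longrightarrow> p \<le> 2 / real (kk p)"
        "p \<ge> 1 \<Longrightarrow> kk p = 1"
proof -
  have "1/p > 0" using assms by simp
  hence "ceiling (1/p) \<ge> 0" by linarith
  hence c: "real (kk p) = of_int (ceiling (1/p))" unfolding kk_def
    by simp
  have a: "real (kk p) \<ge> 1/p" using c by simp
  have b: "real (kk p) < 1/p + 1" using c by linarith
  have "1/p > 0" using assms by simp
  hence "real (kk p) > 0" using a by linarith
  thus "kk p \<ge> 1" by simp
  show "1 / real (kk p) \<le> p" using a assms \<open>real (kk p) > 0\<close>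
    by (simp add: field_simps)
  { assume "p < 1"
    hence "1/p > 1" using assms by simp
    hence "real (kk p) < 2/p" using b by (simp add: field_simps)
    thus "p \<le> 2 / real (kk p)" using assms \<open>real (kk p) > 0\<close> by (simp add: field_simps) }
  { assume "p \<ge> 1"
    hence "1/p \<le> 1" using assms by simp
    hence "real (kk p) < 2" using b by linarith
    thus "kk p = 1" using \<open>kk p \<ge> 1\<close> by linarith }
qed

lemma kk_mono:
  assumes "0 < q" "q \<le> p" shows "kk p \<le> kk q"
proof -
  have "1/p \<le> 1/q" using assms by (simp add: frac_le)
  hence "ceiling (1/p) \<le> ceiling (1/q)" by (rule ceiling_mono)
  thus ?thesis unfolding kk_def by (rule nat_mono)
qed

lemma main_inc:
  assumes psi: "psi \<in> DD TYPE('d::finite)"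
  shows "\<exists>phi \<in> DD' TYPE('d). (W phi :: ((real ^ 'd) \<times> (real ^ 'd)) set) \<subseteq> W psi"
proof -
  define phi where "phi n = 1 / real (kk (psi n))" for n
  have pos: "\<And>n. n \<ge> 1 \<Longrightarrow> psi n > 0" using pos_of_DD[OF psi] by blast
  have Dm: "\<forall>m n. 1 \<le> m \<and> m \<le> n \<longrightarrow> psi n \<le> psi m"
    and Ds: "\<not> summable (\<lambda>n. psi (Suc n) ^ CARD('d))"
    using psi unfolding DD_def mem_Collect_eq by simp_all
  have le: "\<And>n. n \<ge> 1 \<Longrightarrow> phi n \<le> psi n" unfolding phi_def using kk_props(2) pos by blast
  have nn: "\<And>n. phi n \<ge> 0" unfolding phi_def by simp
  have mono: "\<And>m n. 1 \<le> m \<and> m \<le> n \<Longrightarrow> phi n \<le> phi m"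
  proof -
    fix m n :: nat assume h: "1 \<le> m \<and> m \<le> n"
    have "psi n \<le> psi m" using Dm h by blast
    hence "kk (psi m) \<le> kk (psi n)" using kk_mono pos h by simp
    moreover have "kk (psi m) \<ge> 1" using kk_props(1) pos h by simp
    ultimately show "phi n \<le> phi m" unfolding phi_def
      by (simp add: frac_le)
  qed
  have nsum: "\<not> summable (\<lambda>n. phi (Suc n) ^ CARD('d))"
  proof
    assume s: "summable (\<lambda>n. phi (Suc n) ^ CARD('d))"
    hence "(\<lambda>n. phi (Suc n) ^ CARD('d)) \<longlonglongrightarrow> 0" by (rule summable_LIMSEQ_zero)
    hence "eventually (\<lambda>n. phi (Suc n) ^ CARD('d) < 1) sequentially"
      by (rule order_tendstoD) simp
    hence ev: "eventually (\<lambda>n. norm (psi (Suc n) ^ CARD('d)) \<le> 2 ^ CARD('d) * phi (Suc n) ^ CARD('d)) sequentially"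
    proof (rule eventually_mono)
      fix n assume a: "phi (Suc n) ^ CARD('d) < 1"
      have p: "psi (Suc n) > 0" using pos by simp
      have "psi (Suc n) < 1"
      proof (rule ccontr)
        assume "\<not> psi (Suc n) < 1"
        hence "kk (psi (Suc n)) = 1" using kk_props(4) p by simp
        hence "phi (Suc n) = 1" unfolding phi_def by simp
        with a show False by simp
      qed
      hence "psi (Suc n) \<le> 2 * phi (Suc n)" using kk_props(3) p unfolding phi_def by simp
      hence "psi (Suc n) ^ CARD('d) \<le> (2 * phi (Suc n)) ^ CARD('d)"
        using p by (intro power_mono) auto
      thus "norm (psi (Suc n) ^ CARD('d)) \<le> 2 ^ CARD('d) * phi (Suc n) ^ CARD('d)"
        using p by (simp add: power_mult_distrib)
    qed
    have s2: "summable (\<lambda>n. 2 ^ CARD('d) * phi (Suc n) ^ CARD('d))"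
      by (rule summable_mult[OF s])
    have "summable (\<lambda>n. psi (Suc n) ^ CARD('d))"
      by (rule summable_comparison_test_ev[OF ev s2])
    thus False using Ds by (rule notE[rotated])
  qed
  have rec: "\<forall>n\<ge>1. \<exists>k::nat. k \<ge> 1 \<and> phi n = 1 / real k"
  proof (intro allI impI)
    fix n :: nat assume "n \<ge> 1"
    hence "kk (psi n) \<ge> 1" using kk_props(1) pos by simp
    thus "\<exists>k::nat. k \<ge> 1 \<and> phi n = 1 / real k" unfolding phi_def
      by (intro exI[of _ "kk (psi n)"]) simp
  qed
  have "phi \<in> DD TYPE('d)"
    unfolding DD_def mem_Collect_eq
  proof (intro conjI allI impI)
    show "\<And>n. 1 \<le> n \<Longrightarrow> 0 \<le> phi n" using nn by simp
    show "\<And>m n. 1 \<le> m \<and> m \<le> n \<Longrightarrow> phi n \<le> phi m" by (rule mono)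
    show "\<not> summable (\<lambda>n. phi (Suc n) ^ CARD('d))" by (rule nsum)
  qed
  hence "phi \<in> DD' TYPE('d)"
    unfolding DD'_def using rec by blast
  moreover have "(W phi :: ((real ^ 'd) \<times> (real ^ 'd)) set) \<subseteq> W psi"
  proof
    fix z :: "(real ^ 'd) \<times> (real ^ 'd)" assume "z \<in> W phi"
    then obtain x y where z: "z = (x, y)"
      and i: "infinite {n::nat. n \<ge> 1 \<and> znorm (of_nat n *\<^sub>R x + y) < phi n}"
      unfolding W_def by auto
    have "{n::nat. n \<ge> 1 \<and> znorm (of_nat n *\<^sub>R x + y) < phi n}
        \<subseteq> {n::nat. n \<ge> 1 \<and> znorm (of_nat n *\<^sub>R x + y) < psi n}"
    proof (rule Collect_mono, rule impI)
      fix n :: nat assume "n \<ge> 1 \<and> znorm (of_nat n *\<^sub>R x + y) < phi n"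
      thus "n \<ge> 1 \<and> znorm (of_nat n *\<^sub>R x + y) < psi n" using le[of n] by auto
    qed
    hence "infinite {n::nat. n \<ge> 1 \<and> znorm (of_nat n *\<^sub>R x + y) < psi n}"
      using i infinite_super by blast
    thus "z \<in> W psi" unfolding W_def z by simp
  qed
  ultimately show ?thesis by blast
qed

theorem lemma8:
  "Pi_set TYPE('d::finite) = (\<Inter>psi \<in> DD' TYPE('d). (W psi :: ((real ^ 'd) \<times> (real ^ 'd)) set))"
proof
  show "Pi_set TYPE('d) \<subseteq> (\<Inter>psi \<in> DD' TYPE('d). (W psi :: ((real ^ 'd) \<times> (real ^ 'd)) set))"
    unfolding Pi_set_def DD'_def by blast
  show "(\<Inter>psi \<in> DD' TYPE('d). (W psi :: ((real ^ 'd) \<times> (real ^ 'd)) set)) \<subseteq> Pi_set TYPE('d)"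
  proof
    fix z assume z: "z \<in> (\<Inter>psi \<in> DD' TYPE('d). (W psi :: ((real ^ 'd) \<times> (real ^ 'd)) set))"
    show "z \<in> Pi_set TYPE('d)" unfolding Pi_set_def
    proof
      fix psi assume "psi \<in> DD TYPE('d)"
      then obtain phi where "phi \<in> DD' TYPE('d)" "(W phi :: ((real ^ 'd) \<times> (real ^ 'd)) set) \<subseteq> W psi"
        using main_inc by blast
      thus "z \<in> W psi" using z by blast
    qed
  qed
qed

end
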